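(* Let $A,B$ be abelian groups, $i,j\geq 1$, and let $\phi:\mathcal{D}_i(A)\rightarrow\mathcal{D}_j(B)$ be a morphism. If $i>j$ then $\phi$ is constant. If $1\leq i\leq j$ then $\phi$ is also a morphism from $\mathcal{D}_1(A)$ to $\mathcal{D}_{j-i+1}(B)$.
   Context: A cube morphism $\{0,1\}^n\rightarrow\{0,1\}^m$ is a map that extends to an affine homomorphism $\mathbb{Z}^n\rightarrow\mathbb{Z}^m$. For an abelian group $A$ and $k\in\mathbb{N}$, $\mathcal{D}_k(A)$ is the set $A$ with cube sets $C^n(\mathcal{D}_k(A))$ consisting of those $f:\{0,1\}^n\rightarrow A$ such that for every cube morphism $\psi:\{0,1\}^{k+1}\rightarrow\{0,1\}^n$ we have $\sum_{v\in\{0,1\}^{k+1}}(-1)^{v_1+\dots+v_{k+1}}f(\psi(v))=0$. A morphism between such structures is a map $g$ with $g\circ c\in C^n$ of the target for every $n$ and every $c\in C^n$ of the source. *)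

theory Defs
  imports Main
begin

text \<open>Vertices of the discrete cube {0,1}^n, encoded as functions nat => nat
  that take values in {0,1} on coordinates below n and vanish elsewhere.\<close>
definition cube :: "nat \<Rightarrow> (nat \<Rightarrow> nat) set" where
  "cube n = {v. (\<forall>i<n. v i \<in> {0, 1}) \<and> (\<forall>i\<ge>n. v i = 0)}"

text \<open>A cube morphism {0,1}^m -> {0,1}^n: a map of cubes that is the restriction
  of an affine homomorphism Z^m -> Z^n, i.e. v |-> c + M v with integer c, M.\<close>
definition cube_morphism :: "nat \<Rightarrow> nat \<Rightarrow> ((nat \<Rightarrow> nat) \<Rightarrow> (nat \<Rightarrow> nat)) \<Rightarrow> bool" where
  "cube_morphism m n \<psi> \<longleftrightarrow>
     (\<forall>v\<in>cube m. \<psi> v \<in> cube n) \<and>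
     (\<exists>(c::nat \<Rightarrow> int) (M::nat \<Rightarrow> nat \<Rightarrow> int).
        \<forall>v\<in>cube m. \<forall>i<n. int (\<psi> v i) = c i + (\<Sum>j<m. M i j * int (v j)))"

text \<open>C^n(D_k(A)): maps f : {0,1}^n -> A (only values on cube n matter) whose
  alternating sum over every (k+1)-dimensional cube morphism image vanishes.\<close>
definition D_cube :: "nat \<Rightarrow> nat \<Rightarrow> ((nat \<Rightarrow> nat) \<Rightarrow> 'a::ab_group_add) \<Rightarrow> bool" where
  "D_cube k n f \<longleftrightarrow>
     (\<forall>\<psi>. cube_morphism (Suc k) n \<psi> \<longrightarrow>
        (\<Sum>v\<in>cube (Suc k). (if even (\<Sum>l<Suc k. v l) then f (\<psi> v) else - f (\<psi> v))) = 0)"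

definition D_morphism :: "nat \<Rightarrow> nat \<Rightarrow> ('a::ab_group_add \<Rightarrow> 'b::ab_group_add) \<Rightarrow> bool" where
  "D_morphism i j g \<longleftrightarrow> (\<forall>n f. D_cube i n (f :: (nat \<Rightarrow> nat) \<Rightarrow> 'a) \<longrightarrow> D_cube j n (g \<circ> f))"

end

theory Submission
  imports Defs
begin

definition altm :: "nat \<Rightarrow> ((nat \<Rightarrow> nat) \<Rightarrow> 'a::ab_group_add) \<Rightarrow> 'a" where
  "altm m g = (\<Sum>v\<in>cube m. (if even (\<Sum>l<m. v l) then g v else - g v))"

definition ind :: "nat set \<Rightarrow> nat \<Rightarrow> nat" where
  "ind U = (\<lambda>l. if l \<in> U then 1 else 0)"

abbreviation z0 :: "nat \<Rightarrow> nat" where "z0 \<equiv> (\<lambda>_. 0)"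

lemma cube_ind: "v \<in> cube m \<Longrightarrow> v = ind {l. l < m \<and> v l = 1}"
  unfolding cube_def ind_def
  by (rule ext) (auto, metis not_le)

lemma finite_cube: "finite (cube m)"
proof -
  have "cube m \<subseteq> ind ` Pow {..<m}"
  proof
    fix v assume "v \<in> cube m"
    then have "v = ind {l. l < m \<and> v l = 1}" by (rule cube_ind)
    moreover have "{l. l < m \<and> v l = 1} \<in> Pow {..<m}" by auto
    ultimately show "v \<in> ind ` Pow {..<m}" by blast
  qed
  then show ?thesis by (rule finite_subset) simp
qed

lemma zero_cube: "z0 \<in> cube m" by (simp add: cube_def)

lemma upd_cube: "v \<in> cube m \<Longrightarrow> s < m \<Longrightarrow> x \<in> {0,1} \<Longrightarrow> v(s:=x) \<in> cube m"
  by (auto simp: cube_def)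

lemma ind_cube: "U \<subseteq> {..<m} \<Longrightarrow> ind U \<in> cube m"
  by (auto simp: cube_def ind_def)

lemma sum_upd1:
  fixes v :: "nat \<Rightarrow> nat"
  assumes "s < m" "v s = 0"
  shows "(\<Sum>l<m. (v(s:=1)) l) = (\<Sum>l<m. v l) + 1"
proof -
  have f: "finite {..<m}" by simp
  have s: "s \<in> {..<m}" using assms by auto
  have e1: "(\<Sum>l<m. (v(s:=1)) l) = (v(s:=1)) s + (\<Sum>l\<in>{..<m}-{s}. (v(s:=1)) l)"
    using sum.remove[OF f s] by blast
  have e2: "(\<Sum>l\<in>{..<m}-{s}. (v(s:=1)) l) = (\<Sum>l\<in>{..<m}-{s}. v l)"
    by (rule sum.cong) auto
  have e3: "(\<Sum>l<m. v l) = v s + (\<Sum>l\<in>{..<m}-{s}. v l)"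
    using sum.remove[OF f s] by blast
  show ?thesis using e1 e2 e3 assms by simp
qed

lemma altm_split:
  assumes "s < m"
  shows "altm m g = (\<Sum>v\<in>{v\<in>cube m. v s = 0}.
     (if even (\<Sum>l<m. v l) then g v else - g v) -
     (if even (\<Sum>l<m. v l) then g (v(s:=1)) else - g (v(s:=1))))"
proof -
  let ?A = "{v\<in>cube m. v s = 0}"
  let ?u = "\<lambda>v. v(s:=1)"
  let ?F = "\<lambda>v. (if even (\<Sum>l<m. v l) then g v else - g v)"
  let ?G = "\<lambda>v. (if even (\<Sum>l<m. v l) then g (v(s:=1)) else - g (v(s:=1)))"
  have finA: "finite ?A" using finite_cube by auto
  have cu: "cube m = ?A \<union> ?u ` ?A"
  proof (rule set_eqI, rule iffI)
    fix v assume v: "v \<in> cube m"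
    show "v \<in> ?A \<union> ?u ` ?A"
    proof (cases "v s = 0")
      case True then show ?thesis using v by auto
    next
      case False
      then have "v s = 1" using v assms by (auto simp: cube_def)
      then have "v = ?u (v(s:=0))" by auto
      moreover have "v(s:=0) \<in> ?A" using upd_cube[OF v assms, of 0] by simp
      ultimately show ?thesis by blast
    qed
  next
    fix v assume "v \<in> ?A \<union> ?u ` ?A"
    then show "v \<in> cube m" using upd_cube assms by auto
  qed
  have disj: "?A \<inter> ?u ` ?A = {}" by auto
  have inj: "inj_on ?u ?A"
  proof (rule inj_onI)
    fix x y assume xy: "x \<in> ?A" "y \<in> ?A" "?u x = ?u y"
    have x0: "x s = 0" "y s = 0" using xy by auto
    have "(?u x)(s:=0) = (?u y)(s:=0)" using xy(3) by simp
    then show "x = y" using x0 by (metis fun_upd_idem fun_upd_upd)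
  qed
  have "altm m g = sum ?F (?A \<union> ?u ` ?A)" unfolding altm_def using cu by simp
  also have "\<dots> = sum ?F ?A + sum ?F (?u ` ?A)"
    by (rule sum.union_disjoint) (use finA disj in auto)
  also have "sum ?F (?u ` ?A) = sum (?F \<circ> ?u) ?A"
    by (rule sum.reindex[OF inj])
  also have "\<dots> = sum (\<lambda>v. - ?G v) ?A"
  proof (rule sum.cong)
    fix v assume "v \<in> ?A"
    then have "(\<Sum>l<m. (v(s:=1)) l) = (\<Sum>l<m. v l) + 1" using sum_upd1 assms by auto
    then show "(?F \<circ> ?u) v = - ?G v" by simp
  qed simp
  finally show ?thesis by (simp add: sum_subtractf sum_negf)
qed

lemma altm_indep:
  assumes "s < m" "\<And>v. v \<in> cube m \<Longrightarrow> g (v(s:=0)) = g (v(s:=1))"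
  shows "altm m g = 0"
proof -
  have "altm m g = (\<Sum>v\<in>{v\<in>cube m. v s = 0}. 0)"
    unfolding altm_split[OF assms(1)]
  proof (rule sum.cong)
    fix v assume v: "v \<in> {v\<in>cube m. v s = 0}"
    then have "v(s:=0) = v" by auto
    then have "g v = g (v(s:=1))" using assms(2)[of v] v by auto
    then show "(if even (\<Sum>l<m. v l) then g v else - g v) -
     (if even (\<Sum>l<m. v l) then g (v(s:=1)) else - g (v(s:=1))) = 0" by simp
  qed simp
  then show ?thesis by simp
qed

lemma altm_const: "0 < m \<Longrightarrow> altm m (\<lambda>_. c) = 0"
  by (rule altm_indep[of 0]) auto

lemma altm_cong: "(\<And>v. v \<in> cube m \<Longrightarrow> g v = h v) \<Longrightarrow> altm m g = altm m h"
  unfolding altm_def by (rule sum.cong) auto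

lemma altm_add: "altm m (\<lambda>v. g v + h v) = altm m g + altm m h"
  unfolding altm_def by (simp add: sum.distrib[symmetric]) (rule sum.cong, auto)

lemma altm_zero: "altm m (\<lambda>v. 0) = 0"
  unfolding altm_def by (rule sum.neutral) auto

lemma altm_sum: "finite I \<Longrightarrow> altm m (\<lambda>v. \<Sum>i\<in>I. g i v) = (\<Sum>i\<in>I. altm m (g i))"
proof (induction I rule: finite_induct)
  case empty then show ?case by (simp add: altm_zero)
next
  case (insert x F)
  then show ?case by (simp add: altm_add)
qed

lemma cube_Suc: "cube n = {v\<in>cube (Suc n). v n = 0}"
  unfolding cube_def apply (auto simp: less_Suc_eq) by (metis Suc_leI le_neq_implies_less)

lemma altm_last: "altm (Suc n) g = altm n g - altm n (\<lambda>v. g (v(n:=1)))"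
proof -
  have "altm (Suc n) g = (\<Sum>v\<in>cube n.
     (if even (\<Sum>l<Suc n. v l) then g v else - g v) -
     (if even (\<Sum>l<Suc n. v l) then g (v(n:=1)) else - g (v(n:=1))))"
    by (subst altm_split[OF lessI]) (simp only: cube_Suc[symmetric])
  also have "\<dots> = (\<Sum>v\<in>cube n.
     (if even (\<Sum>l<n. v l) then g v else - g v) -
     (if even (\<Sum>l<n. v l) then g (v(n:=1)) else - g (v(n:=1))))"
  proof (rule sum.cong)
    fix v assume "v \<in> cube n"
    then have vn: "v n = 0" by (simp add: cube_def)
    show "(if even (\<Sum>l<Suc n. v l) then g v else - g v) -
     (if even (\<Sum>l<Suc n. v l) then g (v(n:=1)) else - g (v(n:=1))) =
     (if even (\<Sum>l<n. v l) then g v else - g v) -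
     (if even (\<Sum>l<n. v l) then g (v(n:=1)) else - g (v(n:=1)))" by (simp add: vn)
  qed simp
  finally show ?thesis unfolding altm_def by (simp add: sum_subtractf)
qed

lemma cube_0: "cube 0 = {z0}"
  unfolding cube_def by auto

lemma altm_0: "altm 0 g = g z0"
  unfolding altm_def cube_0 by simp

lemma cm_dep:
  assumes cm: "cube_morphism m n \<psi>" and t: "t < n"
  shows "\<exists>a. \<forall>v\<in>cube m. \<forall>v'\<in>cube m. v a = v' a \<longrightarrow> \<psi> v t = \<psi> v' t"
proof -
  from cm obtain c M where img: "\<forall>v\<in>cube m. \<psi> v \<in> cube n"
    and aff: "\<forall>v\<in>cube m. \<forall>i<n. int (\<psi> v i) = c i + (\<Sum>j<m. M i j * int (v j))"
    unfolding cube_morphism_def by blast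
  define g where "g v = c t + (\<Sum>j<m. M t j * int (v j))" for v
  have g01: "g v = 0 \<or> g v = 1" if "v \<in> cube m" for v
  proof -
    have "\<psi> v t = 0 \<or> \<psi> v t = 1" using img that t by (auto simp: cube_def)
    then show ?thesis using aff that t unfolding g_def by force
  qed
  have gind: "g (ind U) = c t + (\<Sum>j\<in>U. M t j)" if "U \<subseteq> {..<m}" for U
  proof -
    have "(\<Sum>j<m. M t j * int (ind U j)) = (\<Sum>j<m. if j \<in> U then M t j else 0)"
      by (rule sum.cong) (auto simp: ind_def)
    also have "\<dots> = (\<Sum>j\<in>{..<m} \<inter> U. M t j)" by (rule sum.inter_restrict[symmetric]) simp
    also have "{..<m} \<inter> U = U" using that by auto
    finally show ?thesis unfolding g_def by simp
  qed
  obtain a where a: "\<forall>b<m. b \<noteq> a \<longrightarrow> M t b = 0"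
  proof (cases "\<forall>b<m. M t b = 0")
    case True then show ?thesis using that by blast
  next
    case False
    then obtain a where a: "a < m" "M t a \<noteq> 0" by auto
    have "\<forall>b<m. b \<noteq> a \<longrightarrow> M t b = 0"
    proof (intro allI impI, rule ccontr)
      fix b assume b: "b < m" "b \<noteq> a" "M t b \<noteq> 0"
      have s: "{} \<subseteq> {..<m}" "{a} \<subseteq> {..<m}" "{b} \<subseteq> {..<m}" "{a,b} \<subseteq> {..<m}"
        using a b by auto
      have "g (ind {}) = 0 \<or> g (ind {}) = 1" "g (ind {a}) = 0 \<or> g (ind {a}) = 1"
        "g (ind {b}) = 0 \<or> g (ind {b}) = 1" "g (ind {a,b}) = 0 \<or> g (ind {a,b}) = 1"
        using g01 ind_cube[OF s(1)] ind_cube[OF s(2)] ind_cube[OF s(3)] ind_cube[OF s(4)] by auto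
      moreover have "g (ind {}) = c t" "g (ind {a}) = c t + M t a" "g (ind {b}) = c t + M t b"
        "g (ind {a,b}) = c t + M t a + M t b"
        using gind[OF s(1)] gind[OF s(2)] gind[OF s(3)] gind[OF s(4)] b by auto
      ultimately show False using a b by auto
    qed
    then show ?thesis using that by blast
  qed
  show ?thesis
  proof (rule exI[of _ a], intro ballI impI)
    fix v v' assume v: "v \<in> cube m" "v' \<in> cube m" "v a = v' a"
    have "(\<Sum>j<m. M t j * int (v j)) = (\<Sum>j<m. M t j * int (v' j))"
    proof (rule sum.cong)
      fix j assume "j \<in> {..<m}"
      then show "M t j * int (v j) = M t j * int (v' j)" using a v(3) by (cases "j = a") auto
    qed simp
    then have "int (\<psi> v t) = int (\<psi> v' t)" using aff v t by simp
    then show "\<psi> v t = \<psi> v' t" by simp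
  qed
qed

lemma altm_vanish:
  assumes cm: "cube_morphism (Suc i) N \<chi>" and fin: "finite T" and card: "card T \<le> i"
    and dep: "\<And>w w'. w \<in> cube N \<Longrightarrow> w' \<in> cube N \<Longrightarrow> (\<forall>t\<in>T. w t = w' t) \<Longrightarrow> h w = h w'"
  shows "altm (Suc i) (\<lambda>u. h (\<chi> u)) = 0"
proof -
  have "\<forall>t. \<exists>a. t < N \<longrightarrow> (\<forall>v\<in>cube (Suc i). \<forall>v'\<in>cube (Suc i). v a = v' a \<longrightarrow> \<chi> v t = \<chi> v' t)"
    using cm_dep[OF cm] by blast
  then obtain a where a0: "\<forall>t. t < N \<longrightarrow> (\<forall>v\<in>cube (Suc i). \<forall>v'\<in>cube (Suc i). v (a t) = v' (a t) \<longrightarrow> \<chi> v t = \<chi> v' t)"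
    by (rule choice[THEN exE]) blast
  have a: "\<And>t. t < N \<Longrightarrow> (\<forall>v\<in>cube (Suc i). \<forall>v'\<in>cube (Suc i). v (a t) = v' (a t) \<longrightarrow> \<chi> v t = \<chi> v' t)"
    using a0 by blast
  have img: "\<And>v. v \<in> cube (Suc i) \<Longrightarrow> \<chi> v \<in> cube N" using cm unfolding cube_morphism_def by blast
  obtain s where s: "s < Suc i" "s \<notin> a ` T"
  proof (rule ccontr)
    assume "\<not> thesis"
    with that have "{..<Suc i} \<subseteq> a ` T" by auto
    then have "card {..<Suc i} \<le> card (a ` T)" using fin by (intro card_mono) auto
    moreover have "card (a ` T) \<le> card T" using fin by (rule card_image_le)
    ultimately show False using card by simp
  qed
  show ?thesis
  proof (rule altm_indep[OF s(1)])
    fix v assume v: "v \<in> cube (Suc i)"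
    have v0: "v(s:=0) \<in> cube (Suc i)" and v1: "v(s:=1) \<in> cube (Suc i)" using upd_cube[OF v s(1)] by auto
    show "h (\<chi> (v(s:=0))) = h (\<chi> (v(s:=1)))"
    proof (rule dep[OF img[OF v0] img[OF v1]], rule ballI)
      fix t assume tT: "t \<in> T"
      show "\<chi> (v(s:=0)) t = \<chi> (v(s:=1)) t"
      proof (cases "t < N")
        case True
        have "a t \<noteq> s" using s tT by auto
        then have "(v(s:=0)) (a t) = (v(s:=1)) (a t)" by simp
        then show ?thesis using a[OF True] v0 v1 by blast
      next
        case False
        then show ?thesis using img[OF v0] img[OF v1] by (auto simp: cube_def)
      qed
    qed
  qed
qed

lemma D_cube_altm: "D_cube k n f = (\<forall>\<psi>. cube_morphism (Suc k) n \<psi> \<longrightarrow> altm (Suc k) (\<lambda>v. f (\<psi> v)) = 0)"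
  by (simp add: D_cube_def altm_def)

lemma cm_id: "cube_morphism m m (\<lambda>v. v)"
proof -
  have h: "int (v i) = 0 + (\<Sum>j<m. (if i = j then 1 else 0) * int (v j))" if "i < m" for v :: "nat \<Rightarrow> nat" and i
  proof -
    have "(\<Sum>j<m. (if i = j then 1 else 0) * int (v j)) = (\<Sum>j<m. if i = j then int (v j) else 0)"
      by (rule sum.cong) auto
    also have "\<dots> = int (v i)" using that by (simp add: sum.delta)
    finally show ?thesis by simp
  qed
  show ?thesis unfolding cube_morphism_def
    apply (rule conjI, simp)
    apply (rule exI[of _ "\<lambda>_::nat. 0::int"], rule exI[of _ "\<lambda>i j. if i = j then 1 else 0"])
    using h by blast
qed

lemma altm_delta:
  assumes "0 < m"
  shows "altm m (\<lambda>v. if v = z0 then p else q) = p - q"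
proof -
  have "altm m (\<lambda>v. if v = z0 then p else q) = altm m (\<lambda>v. q + (if v = z0 then p - q else 0))"
    by (rule altm_cong) auto
  also have "\<dots> = altm m (\<lambda>v. q) + altm m (\<lambda>v. if v = z0 then p - q else 0)"
    by (rule altm_add)
  also have "altm m (\<lambda>v. q) = 0" using altm_const[OF assms] .
  also have "altm m (\<lambda>v. if v = z0 then p - q else 0) = (\<Sum>v\<in>cube m. if v = z0 then p - q else 0)"
    unfolding altm_def by (rule sum.cong) auto
  also have "\<dots> = p - q" using finite_cube zero_cube by (simp add: sum.delta)
  finally show ?thesis by simp
qed

lemma two_rel:
  assumes D: "D_cube 1 n f" and v: "v \<in> cube n" and ab: "a < n" "b < n" "a \<noteq> b"
    and v0: "v a = 0" "v b = 0"
  shows "f (v(a:=1, b:=1)) = f (v(a:=1)) + f (v(b:=1)) - f v"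
proof -
  define \<chi> where "\<chi> u = v(a := u 0, b := u (Suc 0))" for u :: "nat \<Rightarrow> nat"
  have cm: "cube_morphism (Suc 1) n \<chi>"
    unfolding cube_morphism_def
  proof (rule conjI)
    show "\<forall>u\<in>cube (Suc 1). \<chi> u \<in> cube n" using v ab unfolding \<chi>_def cube_def by auto
    have h: "int (\<chi> u t) = (if t = a \<or> t = b then 0 else int (v t)) +
        (\<Sum>j<Suc 1. (if j = 0 then (if t = a then 1 else 0) else (if t = b then 1 else 0)) * int (u j))"
      for u t using ab(3) unfolding \<chi>_def by auto
    show "\<exists>c M. \<forall>u\<in>cube (Suc 1). \<forall>i<n. int (\<chi> u i) = c i + (\<Sum>j<Suc 1. M i j * int (u j))"
      apply (rule exI[of _ "\<lambda>t. if t = a \<or> t = b then 0 else int (v t)"])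
      apply (rule exI[of _ "\<lambda>t j. if j = 0 then (if t = a then 1 else 0) else (if t = b then 1 else 0)"])
      using h by blast
  qed
  then have "altm (Suc 1) (\<lambda>u. f (\<chi> u)) = 0" using D unfolding D_cube_altm by blast
  moreover have "altm (Suc 1) (\<lambda>u. f (\<chi> u)) = f (\<chi> z0) - f (\<chi> (z0(0:=1))) -
      (f (\<chi> (z0(Suc 0:=1))) - f (\<chi> ((z0(0:=1))(Suc 0:=1))))"
    unfolding One_nat_def altm_last altm_0 by simp
  moreover have "\<chi> z0 = v" "\<chi> (z0(0:=1)) = v(a:=1)" "\<chi> (z0(Suc 0:=1)) = v(b:=1)"
    "\<chi> ((z0(0:=1))(Suc 0:=1)) = v(a:=1, b:=1)"
    unfolding \<chi>_def using v0 ab(3) by (auto intro!: ext)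
  ultimately show ?thesis by (simp add: algebra_simps)
qed

lemma aff_ind:
  fixes f :: "(nat \<Rightarrow> nat) \<Rightarrow> 'a::ab_group_add"
  assumes D: "D_cube 1 n f"
  shows "U \<subseteq> {..<n} \<Longrightarrow> f (ind U) = f z0 + (\<Sum>t\<in>U. f (z0(t:=1)) - f z0)"
proof (induction "card U" arbitrary: U rule: less_induct)
  case less
  have finU: "finite U" using less.prems finite_subset by blast
  show ?case
  proof (cases "U = {}")
    case True
    then show ?thesis by (simp add: ind_def)
  next
    case False
    then obtain x where x: "x \<in> U" by auto
    show ?thesis
    proof (cases "U - {x} = {}")
      case True
      then have "U = {x}" using x by auto
      moreover have "ind {x} = z0(x:=1)" by (auto simp: ind_def)
      ultimately show ?thesis by simp
    next
      case False
      then obtain y where y: "y \<in> U" "y \<noteq> x" by auto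
      define U' where "U' = U - {x, y}"
      have U: "U = insert x (insert y U')" using x y unfolding U'_def by auto
      have xU': "x \<notin> insert y U'" "y \<notin> U'" using y unfolding U'_def by auto
      have finU': "finite U'" using finU unfolding U'_def by auto
      have sub: "U' \<subseteq> {..<n}" "insert x U' \<subseteq> {..<n}" "insert y U' \<subseteq> {..<n}"
        using less.prems x y unfolding U'_def by auto
      have c1: "card U' < card U" using finU x unfolding U'_def by (intro psubset_card_mono) auto
      have c2: "card (insert x U') < card U" using finU x y unfolding U'_def by (intro psubset_card_mono) auto
      have c3: "card (insert y U') < card U" using finU x y unfolding U'_def by (intro psubset_card_mono) auto
      have xn: "x < n" "y < n" using less.prems x y by auto
      have r: "f ((ind U')(x:=1, y:=1)) = f ((ind U')(x:=1)) + f ((ind U')(y:=1)) - f (ind U')"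
        by (rule two_rel[OF D ind_cube[OF sub(1)] xn y(2)[symmetric]]) (use xU' in \<open>auto simp: ind_def\<close>)
      have e: "(ind U')(x:=1, y:=1) = ind U" "(ind U')(x:=1) = ind (insert x U')"
        "(ind U')(y:=1) = ind (insert y U')"
        unfolding U by (auto simp: ind_def intro!: ext)
      have IH1: "f (ind U') = f z0 + (\<Sum>t\<in>U'. f (z0(t:=1)) - f z0)" using less.hyps[OF c1 sub(1)] .
      have IH2: "f (ind (insert x U')) = f z0 + (\<Sum>t\<in>insert x U'. f (z0(t:=1)) - f z0)" using less.hyps[OF c2 sub(2)] .
      have IH3: "f (ind (insert y U')) = f z0 + (\<Sum>t\<in>insert y U'. f (z0(t:=1)) - f z0)" using less.hyps[OF c3 sub(3)] .
      have s: "(\<Sum>t\<in>U. f (z0(t:=1)) - f z0) = (f (z0(x:=1)) - f z0) + ((f (z0(y:=1)) - f z0) + (\<Sum>t\<in>U'. f (z0(t:=1)) - f z0))"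
        unfolding U using finU' xU' by simp
      have s2: "(\<Sum>t\<in>insert x U'. f (z0(t:=1)) - f z0) = (f (z0(x:=1)) - f z0) + (\<Sum>t\<in>U'. f (z0(t:=1)) - f z0)"
        using finU' xU' by simp
      have s3: "(\<Sum>t\<in>insert y U'. f (z0(t:=1)) - f z0) = (f (z0(y:=1)) - f z0) + (\<Sum>t\<in>U'. f (z0(t:=1)) - f z0)"
        using finU' xU' by simp
      have fU: "f (ind U) = f (ind (insert x U')) + f (ind (insert y U')) - f (ind U')"
        by (simp only: e(1)[symmetric] e(2)[symmetric] e(3)[symmetric]) (rule r)
      show ?thesis unfolding fU IH1 IH2 IH3 s s2 s3 by (simp add: algebra_simps)
    qed
  qed
qed

lemma affine:
  fixes f :: "(nat \<Rightarrow> nat) \<Rightarrow> 'a::ab_group_add"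
  assumes D: "D_cube 1 n f" and w: "w \<in> cube n"
  shows "f w = f z0 + (\<Sum>t<n. if w t = 1 then f (z0(t:=1)) - f z0 else 0)"
proof -
  have "w = ind {t\<in>{..<n}. w t = 1}" using cube_ind[OF w] by simp
  then have "f w = f z0 + (\<Sum>t\<in>{t\<in>{..<n}. w t = 1}. f (z0(t:=1)) - f z0)"
    using aff_ind[OF D, of "{t\<in>{..<n}. w t = 1}"] by auto
  also have "(\<Sum>t\<in>{t\<in>{..<n}. w t = 1}. f (z0(t:=1)) - f z0) = (\<Sum>t<n. if w t = 1 then f (z0(t:=1)) - f z0 else 0)"
    by (rule sum.inter_filter) simp
  finally show ?thesis .
qed

lemma altm_Q:
  assumes m: "0 < m" and H: "\<And>w p. m \<le> p \<Longrightarrow> H (w(p:=1)) = H w"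
  shows "altm (m + r) (\<lambda>w. if (\<forall>k<r. w (m+k) = 1) then H w else c) = (if even r then altm m H else - altm m H)"
proof (induction r)
  case 0 show ?case by simp
next
  case (Suc r)
  have "altm (m + Suc r) (\<lambda>w. if (\<forall>k<Suc r. w (m+k) = 1) then H w else c) =
    altm (m+r) (\<lambda>w. if (\<forall>k<Suc r. w (m+k) = 1) then H w else c) -
    altm (m+r) (\<lambda>v. if (\<forall>k<Suc r. (v(m+r:=1)) (m+k) = 1) then H (v(m+r:=1)) else c)"
    unfolding add_Suc_right by (rule altm_last)
  also have "altm (m+r) (\<lambda>w. if (\<forall>k<Suc r. w (m+k) = 1) then H w else c) = altm (m+r) (\<lambda>_. c)"
  proof (rule altm_cong)
    fix v assume "v \<in> cube (m+r)"
    then have "v (m+r) = 0" by (simp add: cube_def)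
    then show "(if (\<forall>k<Suc r. v (m+k) = 1) then H v else c) = c" by auto
  qed
  also have "\<dots> = 0" using m by (intro altm_const) simp
  also have "altm (m+r) (\<lambda>v. if (\<forall>k<Suc r. (v(m+r:=1)) (m+k) = 1) then H (v(m+r:=1)) else c) =
     altm (m+r) (\<lambda>w. if (\<forall>k<r. w (m+k) = 1) then H w else c)"
  proof (rule altm_cong)
    fix v :: "nat \<Rightarrow> nat"
    have q: "(\<forall>k<Suc r. (v(m+r:=1)) (m+k) = 1) = (\<forall>k<r. v (m+k) = 1)"
      by (auto simp: less_Suc_eq)
    have hH: "H (v(m+r:=1)) = H v" using H by simp
    show "(if (\<forall>k<Suc r. (v(m+r:=1)) (m+k) = 1) then H (v(m+r:=1)) else c) =
      (if (\<forall>k<r. v (m+k) = 1) then H v else c)" by (simp only: q hH)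
  qed
  finally show ?case using Suc.IH by simp
qed

theorem mainTheorem3:
  fixes \<phi> :: "'a::ab_group_add \<Rightarrow> 'b::ab_group_add"
    and i j :: nat
  assumes "i \<ge> 1" and "j \<ge> 1"
    and "D_morphism i j \<phi>"
  shows "(i > j \<longrightarrow> (\<exists>c. \<forall>x. \<phi> x = c)) \<and>
         (i \<le> j \<longrightarrow> D_morphism 1 (j - i + 1) \<phi>)"
proof -
  have Dm: "\<And>n (f::(nat\<Rightarrow>nat)\<Rightarrow>'a). D_cube i n f \<Longrightarrow> D_cube j n (\<phi> \<circ> f)"
    using assms(3) unfolding D_morphism_def by blast
  have P1: "i > j \<longrightarrow> (\<exists>c. \<forall>x. \<phi> x = c)"
  proof
    assume ij: "j < i"
    have "\<phi> x = \<phi> 0" for x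
    proof -
      define F where "F v = (if v = z0 then x else 0)" for v :: "nat \<Rightarrow> nat"
      have "D_cube i (Suc j) F"
        unfolding D_cube_altm
      proof (intro allI impI)
        fix \<chi> assume cm: "cube_morphism (Suc i) (Suc j) \<chi>"
        show "altm (Suc i) (\<lambda>u. F (\<chi> u)) = 0"
        proof (rule altm_vanish[OF cm, of "{..<Suc j}"])
          show "finite {..<Suc j}" by simp
          show "card {..<Suc j} \<le> i" using ij by simp
          fix w w' assume ww: "w \<in> cube (Suc j)" "w' \<in> cube (Suc j)" "\<forall>t\<in>{..<Suc j}. w t = w' t"
          have "w = w'"
          proof (rule ext)
            fix l show "w l = w' l" using ww by (cases "l < Suc j") (auto simp: cube_def)
          qed
          then show "F w = F w'" by simp
        qed
      qed
      then have "D_cube j (Suc j) (\<phi> \<circ> F)" by (rule Dm)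
      then have "altm (Suc j) (\<lambda>v. (\<phi> \<circ> F) v) = 0" using cm_id unfolding D_cube_altm by blast
      moreover have "altm (Suc j) (\<lambda>v. (\<phi> \<circ> F) v) = altm (Suc j) (\<lambda>v. if v = z0 then \<phi> x else \<phi> 0)"
        by (rule altm_cong) (simp add: F_def)
      moreover have "altm (Suc j) (\<lambda>v. if v = z0 then \<phi> x else \<phi> 0) = \<phi> x - \<phi> 0"
        by (rule altm_delta) simp
      ultimately show ?thesis by simp
    qed
    then show "\<exists>c. \<forall>x. \<phi> x = c" by blast
  qed
  have P2: "i \<le> j \<longrightarrow> D_morphism 1 (j - i + 1) \<phi>"
  proof
    assume ij: "i \<le> j"
    define m where "m = Suc (j - i + 1)"
    have mj: "m + (i - 1) = Suc j" "m \<le> Suc j" "0 < m" using ij assms(1) unfolding m_def by auto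
    show "D_morphism 1 (j - i + 1) \<phi>"
      unfolding D_morphism_def
    proof (intro allI impI)
      fix n and f :: "(nat\<Rightarrow>nat) \<Rightarrow> 'a" assume D1: "D_cube 1 n f"
      show "D_cube (j - i + 1) n (\<phi> \<circ> f)"
        unfolding D_cube_altm
      proof (intro allI impI)
        fix \<psi> assume cm\<psi>0: "cube_morphism (Suc (j - i + 1)) n \<psi>"
        have cm\<psi>: "cube_morphism m n \<psi>" using cm\<psi>0 unfolding m_def .
        define res where "res w = (\<lambda>l. if l < m then w l else 0)" for w :: "nat\<Rightarrow>nat"
        define Q where "Q w = (\<forall>k<i-1. w (m+k) = 1)" for w :: "nat\<Rightarrow>nat"
        define F where "F w = (if Q w then f (\<psi> (res w)) else 0)" for w
        define d where "d t = f (z0(t:=1)) - f z0" for t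
        have resc: "res w \<in> cube m" if "w \<in> cube (Suc j)" for w
          using that mj unfolding res_def cube_def by auto
        have psic: "\<psi> v \<in> cube n" if "v \<in> cube m" for v
          using cm\<psi> that unfolding cube_morphism_def by blast
        have decomp: "F w = (if Q w then f z0 else 0) +
            (\<Sum>t<n. if Q w \<and> \<psi> (res w) t = 1 then d t else 0)" if "w \<in> cube (Suc j)" for w
        proof (cases "Q w")
          case True
          then show ?thesis unfolding F_def d_def using affine[OF D1 psic[OF resc[OF that]]] by simp
        next
          case False then show ?thesis unfolding F_def by simp
        qed
        have TQ: "Q w = Q w'" if "\<forall>t\<in>{m..<m + (i-1)}. w t = w' t" for w w'
          using that unfolding Q_def by auto
        have "D_cube i (Suc j) F"
          unfolding D_cube_altm
        proof (intro allI impI)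
          fix \<chi> assume cm: "cube_morphism (Suc i) (Suc j) \<chi>"
          have img: "\<chi> u \<in> cube (Suc j)" if "u \<in> cube (Suc i)" for u
            using cm that unfolding cube_morphism_def by blast
          have "altm (Suc i) (\<lambda>u. F (\<chi> u)) = altm (Suc i) (\<lambda>u. (if Q (\<chi> u) then f z0 else 0) +
              (\<Sum>t<n. if Q (\<chi> u) \<and> \<psi> (res (\<chi> u)) t = 1 then d t else 0))"
            by (rule altm_cong) (simp add: decomp img)
          also have "\<dots> = altm (Suc i) (\<lambda>u. if Q (\<chi> u) then f z0 else 0) +
              (\<Sum>t<n. altm (Suc i) (\<lambda>u. if Q (\<chi> u) \<and> \<psi> (res (\<chi> u)) t = 1 then d t else 0))"
            by (simp only: altm_add altm_sum[OF finite_lessThan])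
          also have "altm (Suc i) (\<lambda>u. if Q (\<chi> u) then f z0 else 0) = 0"
          proof (rule altm_vanish[OF cm, of "{m..<m + (i-1)}"])
            show "finite {m..<m + (i-1)}" by simp
            show "card {m..<m + (i-1)} \<le> i" by simp
            fix w w' assume "w \<in> cube (Suc j)" "w' \<in> cube (Suc j)" "\<forall>t\<in>{m..<m + (i-1)}. w t = w' t"
            then show "(if Q w then f z0 else 0) = (if Q w' then f z0 else 0)" using TQ by metis
          qed
          also have "(\<Sum>t<n. altm (Suc i) (\<lambda>u. if Q (\<chi> u) \<and> \<psi> (res (\<chi> u)) t = 1 then d t else 0)) = 0"
          proof (rule sum.neutral, rule ballI)
            fix t assume "t \<in> {..<n}"
            then have t: "t < n" by simp
            obtain a where a: "\<forall>v\<in>cube m. \<forall>v'\<in>cube m. v a = v' a \<longrightarrow> \<psi> v t = \<psi> v' t"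
              using cm_dep[OF cm\<psi> t] by blast
            show "altm (Suc i) (\<lambda>u. if Q (\<chi> u) \<and> \<psi> (res (\<chi> u)) t = 1 then d t else 0) = 0"
            proof (rule altm_vanish[OF cm, of "insert a {m..<m + (i-1)}"])
              show "finite (insert a {m..<m + (i-1)})" by simp
              show "card (insert a {m..<m + (i-1)}) \<le> i" using assms(1) by (simp add: card_insert_if)
              fix w w' assume ww: "w \<in> cube (Suc j)" "w' \<in> cube (Suc j)"
                "\<forall>t\<in>insert a {m..<m + (i-1)}. w t = w' t"
              have "Q w = Q w'" using TQ ww(3) by blast
              moreover have "res w a = res w' a" using ww(3) unfolding res_def by auto
              then have "\<psi> (res w) t = \<psi> (res w') t" using a resc[OF ww(1)] resc[OF ww(2)] by blast
              ultimately show "(if Q w \<and> \<psi> (res w) t = 1 then d t else 0) =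
                  (if Q w' \<and> \<psi> (res w') t = 1 then d t else 0)" by simp
            qed
          qed
          finally show "altm (Suc i) (\<lambda>u. F (\<chi> u)) = 0" by simp
        qed
        then have "D_cube j (Suc j) (\<phi> \<circ> F)" by (rule Dm)
        then have A0: "altm (Suc j) (\<lambda>v. (\<phi> \<circ> F) v) = 0" using cm_id unfolding D_cube_altm by blast
        define H where "H w = \<phi> (f (\<psi> (res w)))" for w
        have HH: "H (w(p:=1)) = H w" if "m \<le> p" for w p
        proof -
          have "res (w(p:=1)) = res w" using that unfolding res_def by (auto intro!: ext)
          then show ?thesis unfolding H_def by simp
        qed
        have "altm (m + (i-1)) (\<lambda>w. if (\<forall>k<i-1. w (m+k) = 1) then H w else \<phi> 0) =
            (if even (i-1) then altm m H else - altm m H)"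
          by (rule altm_Q[OF mj(3) HH])
        moreover have "altm (m + (i-1)) (\<lambda>w. if (\<forall>k<i-1. w (m+k) = 1) then H w else \<phi> 0) =
            altm (Suc j) (\<lambda>v. (\<phi> \<circ> F) v)"
          unfolding mj(1) by (rule altm_cong) (auto simp: F_def Q_def H_def)
        ultimately have "altm m H = 0" using A0 by (auto split: if_splits)
        moreover have "altm m H = altm (Suc (j - i + 1)) (\<lambda>v. (\<phi> \<circ> f) (\<psi> v))"
          unfolding m_def[symmetric]
        proof (rule altm_cong)
          fix v assume v: "v \<in> cube m"
          have "res v = v" using v unfolding res_def cube_def by (auto intro!: ext)
          then show "H v = (\<phi> \<circ> f) (\<psi> v)" unfolding H_def by simp
        qed
        ultimately show "altm (Suc (j - i + 1)) (\<lambda>v. (\<phi> \<circ> f) (\<psi> v)) = 0" by simp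
      qed
    qed
  qed
  show ?thesis using P1 P2 by blast
qed

end
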